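(* For any field $\mathbb{F}$, $l_0(M_2(\mathbb{F}))=2$; that is, the maximum of $l_0(\mathcal S)$ over all finite generating sets $\mathcal S$ of $M_2(\mathbb{F})$ equals $2$.
   Context: For a finite subset $\mathcal S$ of $M_n(\mathbb{F})$: a word of length $m$ in $\mathcal S$ is a product $S_1\cdots S_m$ with $S_j\in\mathcal S$. $\mathcal L_k^0(\mathcal S)$ is the linear span of all words of length between $1$ and $k$ (the identity is not automatically included), and $\mathcal L^0(\mathcal S)=\bigcup_k\mathcal L^0_k(\mathcal S)$. $\mathcal S$ is a generating set of $M_n(\mathbb{F})$ if the algebra it generates (with or without adjoining the identity; these coincide for $M_n(\mathbb{F})$) is $M_n(\mathbb{F})$. $l_0(\mathcal S)$ is the smallest $k$ with $\mathcal L_k^0(\mathcal S)=\mathcal L_{k+1}^0(\mathcal S)$, and $l_0(M_n(\mathbb{F}))$ is the maximum of $l_0(\mathcal S)$ over all finite generating sets $\mathcal S$ of $M_n(\mathbb{F})$. *)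

theory Defs
  imports "HOL-Analysis.Analysis"
begin

definition smat :: "'a::field \<Rightarrow> 'a^2^2 \<Rightarrow> 'a^2^2" where
  "smat c A = (\<chi> i j. c * A $ i $ j)"

definition lspan :: "(('a::field)^2^2) set \<Rightarrow> ('a^2^2) set" where
  "lspan X = module.span smat X"

definition words :: "nat \<Rightarrow> (('a::field)^2^2) set \<Rightarrow> ('a^2^2) set" where
  "words m S = {foldr (**) xs (mat 1) | xs. length xs = m \<and> set xs \<subseteq> S}"

definition L0 :: "nat \<Rightarrow> (('a::field)^2^2) set \<Rightarrow> ('a^2^2) set" where
  "L0 k S = lspan (\<Union>m\<in>{1..k}. words m S)"

text \<open>Subalgebras (not necessarily unital) of M_2(F) and the generated algebra.\<close>
definition subalgebra :: "(('a::field)^2^2) set \<Rightarrow> bool" where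
  "subalgebra A \<longleftrightarrow> 0 \<in> A \<and> (\<forall>x\<in>A. \<forall>y\<in>A. x + y \<in> A \<and> x ** y \<in> A)
     \<and> (\<forall>c. \<forall>x\<in>A. smat c x \<in> A)"

definition gen_alg :: "(('a::field)^2^2) set \<Rightarrow> ('a^2^2) set" where
  "gen_alg S = \<Inter>{A. S \<subseteq> A \<and> subalgebra A}"

definition generating :: "(('a::field)^2^2) set \<Rightarrow> bool" where
  "generating S \<longleftrightarrow> gen_alg S = UNIV"

definition l0 :: "(('a::field)^2^2) set \<Rightarrow> nat" where
  "l0 S = (LEAST k. L0 k S = L0 (Suc k) S)"

end

theory Submission
  imports Defs
begin

lemma vs_smat: "vector_space (smat :: 'a::field \<Rightarrow> 'a^2^2 \<Rightarrow> 'a^2^2)"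
  unfolding vector_space_def smat_def
  by (auto simp: vec_eq_iff algebra_simps)

interpretation M: vector_space "smat :: 'a::field \<Rightarrow> 'a^2^2 \<Rightarrow> 'a^2^2"
  by (rule vs_smat)

lemma mat_eq2: "(A::'a^2^2) = B \<longleftrightarrow> A$1$1 = B$1$1 \<and> A$1$2 = B$1$2 \<and> A$2$1 = B$2$1 \<and> A$2$2 = B$2$2"
  by (auto simp: vec_eq_iff forall_2)

lemma mult_ent:
  "((A::'a::field^2^2) ** B)$i$j = A$i$1 * B$1$j + A$i$2 * B$2$j"
  by (simp add: matrix_matrix_mult_def sum_2)

lemma smat_ent[simp]: "smat c A $ i $ j = c * A$i$j"
  by (simp add: smat_def)

lemma smat_mult_left: "smat c (A::'a::field^2^2) ** B = smat c (A ** B)"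
  by (simp add: mat_eq2 mult_ent algebra_simps)

lemma smat_mult_right: "(A::'a::field^2^2) ** smat c B = smat c (A ** B)"
  by (simp add: mat_eq2 mult_ent algebra_simps)

lemma matrix_add_rdistrib: "((A::'a::field^2^2) + B) ** (C::'a^2^2) = A ** C + B ** C"
  by (simp add: mat_eq2 mult_ent algebra_simps vector_add_component)

definition tr2 :: "'a::field^2^2 \<Rightarrow> 'a" where "tr2 A = A$1$1 + A$2$2"
definition dt2 :: "'a::field^2^2 \<Rightarrow> 'a" where "dt2 A = A$1$1 * A$2$2 - A$1$2 * A$2$1"

lemma id_sq_l: "((a::'a::field^2^2) ** a) ** b = smat (tr2 a) (a ** b) - smat (dt2 a) b"
  by (simp add: mat_eq2 mult_ent tr2_def dt2_def) algebra

lemma id_sq_r: "((a::'a::field^2^2) ** b) ** b = smat (tr2 b) (a ** b) - smat (dt2 b) a"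
  by (simp add: mat_eq2 mult_ent tr2_def dt2_def) algebra

lemma id_aba: "((a::'a::field^2^2) ** b) ** a = smat (tr2 b) (a ** a) + smat (tr2 (a ** b) - tr2 a * tr2 b) a + smat (dt2 a) b"
  by (simp add: mat_eq2 mult_ent tr2_def dt2_def) algebra

definition EE :: "2 \<Rightarrow> 2 \<Rightarrow> 'a::field^2^2" where
  "EE p q = (\<chi> i j. if i = p \<and> j = q then 1 else 0)"

lemma two_neq: "(1::2) \<noteq> 2" by simp

lemma span_all: "(w::'a::field^2^2) \<in> M.span {EE 1 1, EE 1 2, EE 2 1, EE 2 2}"
proof -
  have "w = smat (w$1$1) (EE 1 1) + smat (w$1$2) (EE 1 2) + smat (w$2$1) (EE 2 1) + smat (w$2$2) (EE 2 2)"
    by (simp add: mat_eq2 EE_def)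
  also have "\<dots> \<in> M.span {EE 1 1, EE 1 2, EE 2 1, EE 2 2}"
    by (intro M.span_add M.span_scale M.span_base) auto
  finally show ?thesis .
qed

lemma card_le4: "card {a,b,c,d::'x} \<le> 4"
  by (simp add: card_insert_if)

lemma indep4_span:
  assumes "M.independent (T::('a::field^2^2) set)" "card T = 4"
  shows "M.span T = UNIV"
proof (rule ccontr)
  assume "M.span T \<noteq> UNIV"
  then obtain w where w: "w \<notin> M.span T" by auto
  have fin: "finite T" using assms(2) card.infinite[of T] by auto
  have wT: "w \<notin> T" using w M.span_base[of w T] by auto
  have ind: "M.independent (insert w T)" using M.independent_insertI[OF w assms(1)] .
  have "insert w T \<subseteq> M.span {EE 1 1, EE 1 2, EE 2 1, EE 2 2}" using span_all by blast
  from M.independent_span_bound[OF _ ind this]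
  have "card (insert w T) \<le> card {EE 1 1, EE 1 2, EE 2 1, EE 2 2 :: 'a^2^2}" by simp
  also have "\<dots> \<le> 4" by (rule card_le4)
  finally show False using fin wT assms(2) by simp
qed

lemma subsp_rmul:
  "M.subspace {w::'a::field^2^2. w ** z \<in> M.span P}"
  unfolding M.subspace_def
  by (auto simp: matrix_add_rdistrib smat_mult_left intro: M.span_add M.span_scale M.span_zero)

lemma key:
  fixes x y z :: "'a::field^2^2"
  defines "P \<equiv> {x,y,z} \<union> {a ** b | a b. a \<in> {x,y,z} \<and> b \<in> {x,y,z}}"
  shows "(x ** y) ** z \<in> M.span P"
proof -
  have gen: "a \<in> M.span P" if "a \<in> {x,y,z}" for a
    using that by (intro M.span_base) (auto simp: P_def)
  have pr: "a ** b \<in> M.span P" if "a \<in> {x,y,z}" "b \<in> {x,y,z}" for a b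
    using that by (intro M.span_base) (auto simp: P_def)
  have sql: "(a ** a) ** b \<in> M.span P" if "a \<in> {x,y,z}" "b \<in> {x,y,z}" for a b
    unfolding id_sq_l using that by (intro M.span_diff M.span_scale pr gen)
  have sqr: "(a ** b) ** b \<in> M.span P" if "a \<in> {x,y,z}" "b \<in> {x,y,z}" for a b
    unfolding id_sq_r using that by (intro M.span_diff M.span_scale pr gen)
  have aba: "(a ** b) ** a \<in> M.span P" if "a \<in> {x,y,z}" "b \<in> {x,y,z}" for a b
    unfolding id_aba using that by (intro M.span_add M.span_scale pr gen)
  have two: "\<exists>k1 k2. u = smat k1 a + smat k2 b" if "u \<in> M.span {a, b}" for u a b :: "'a^2^2"
  proof -
    from that obtain k1 where "u - smat k1 a \<in> M.span {b}" by (auto simp: M.span_insert)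
    then obtain k2 where "u - smat k1 a = smat k2 b" by (auto simp: M.span_singleton)
    then have "u = smat k1 a + smat k2 b" by (metis diff_add_cancel add.commute)
    then show ?thesis by blast
  qed
  consider "z \<in> M.span {x,y}" | "y \<in> M.span {x,z}" | "x \<in> M.span {y,z}"
    | "z \<notin> M.span {x,y}" "y \<notin> M.span {x,z}" "x \<notin> M.span {y,z}" by blast
  then show ?thesis
  proof cases
    case 1
    obtain k1 k2 where e: "z = smat k1 x + smat k2 y" using two[OF 1] by blast
    have "(x ** y) ** z = smat k1 ((x ** y) ** x) + smat k2 ((x ** y) ** y)"
      by (simp add: e matrix_add_ldistrib smat_mult_right)
    then show ?thesis by (simp add: M.span_add M.span_scale aba sqr)
  next
    case 2
    obtain k1 k2 where e: "y = smat k1 x + smat k2 z" using two[OF 2] by blast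
    have "(x ** y) ** z = smat k1 ((x ** x) ** z) + smat k2 ((x ** z) ** z)"
      by (simp add: e matrix_add_ldistrib matrix_add_rdistrib smat_mult_right smat_mult_left)
    then show ?thesis by (simp add: M.span_add M.span_scale sql sqr)
  next
    case 3
    obtain k1 k2 where e: "x = smat k1 y + smat k2 z" using two[OF 3] by blast
    have "(x ** y) ** z = smat k1 ((y ** y) ** z) + smat k2 ((z ** y) ** z)"
      by (simp add: e matrix_add_ldistrib matrix_add_rdistrib smat_mult_right smat_mult_left)
    then show ?thesis by (simp add: M.span_add M.span_scale sql aba)
  next
    case 4
    have zs: "M.span {z} \<subseteq> M.span {x,z}" by (rule M.span_mono) auto
    have yz: "y \<noteq> z" using 4(2) M.span_base[of y "{x,z}"] by auto
    have xy: "x \<noteq> y" "x \<noteq> z" using 4(3) M.span_base[of x "{y,z}"] by auto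
    have z0: "z \<noteq> 0" using 4(1) M.span_zero[of "{x,y}"] by auto
    have i1: "M.independent {z}"
      using z0 M.independent_insert[of z "{}"] by simp
    have i2: "M.independent {y,z}"
      using i1 yz zs 4(2) M.independent_insert[of y "{z}"] by auto
    have indep: "M.independent {x,y,z}"
      using i2 xy 4(3) M.independent_insert[of x "{y,z}"] by auto
    have c3: "card {x,y,z} = 3" using yz xy by simp
    show ?thesis
    proof (cases "\<exists>a\<in>{x,y,z}. \<exists>b\<in>{x,y,z}. a ** b \<notin> M.span {x,y,z}")
      case False
      have "{x,y,z} \<subseteq> {w. w ** z \<in> M.span P}" using pr by auto
      from M.span_minimal[OF this subsp_rmul]
      have "M.span {x,y,z} \<subseteq> {w. w ** z \<in> M.span P}" .
      moreover have "x ** y \<in> M.span {x,y,z}" using False by simp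
      ultimately show ?thesis by blast
    next
      case True
      then obtain a where a: "a \<in> {x,y,z}" and ex: "\<exists>b\<in>{x,y,z}. a ** b \<notin> M.span {x,y,z}"
        by (rule bexE)
      from ex obtain b where b: "b \<in> {x,y,z}" and ab3: "a ** b \<notin> M.span {x,y,z}"
        by (rule bexE)
      note ab = a b ab3
      have nin: "a ** b \<notin> {x,y,z}" using ab(3) M.span_base[of "a ** b" "{x,y,z}"] by auto
      have ind4: "M.independent (insert (a ** b) {x,y,z})"
        using M.independent_insertI[OF ab(3) indep] .
      have c4: "card (insert (a ** b) {x,y,z}) = 4" using nin c3 by simp
      have sub: "insert (a ** b) {x,y,z} \<subseteq> P" using ab by (auto simp: P_def)
      have "(x ** y) ** z \<in> M.span (insert (a ** b) {x,y,z})"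
        using indep4_span[OF ind4 c4] by simp
      then show ?thesis using M.span_mono[OF sub] by blast
    qed
  qed
qed


lemma words1: "words 1 S = S"
proof
  show "words 1 S \<subseteq> S"
    unfolding words_def by (auto simp: length_Suc_conv)
  show "S \<subseteq> words 1 S"
  proof
    fix w assume "w \<in> S"
    then have "w = foldr (**) [w] (mat 1) \<and> length [w] = 1 \<and> set [w] \<subseteq> S" by simp
    then show "w \<in> words 1 S" unfolding words_def by blast
  qed
qed

lemma words2: "words 2 S = {a ** b | a b. a \<in> S \<and> b \<in> S}"
proof
  show "words 2 S \<subseteq> {a ** b | a b. a \<in> S \<and> b \<in> S}"
    unfolding words_def numeral_2_eq_2 by (auto simp: length_Suc_conv) blast
  show "{a ** b | a b. a \<in> S \<and> b \<in> S} \<subseteq> words 2 S"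
  proof
    fix w assume "w \<in> {a ** b | a b. a \<in> S \<and> b \<in> S}"
    then obtain a b where "a \<in> S" "b \<in> S" "w = a ** b" by blast
    then have "w = foldr (**) [a,b] (mat 1) \<and> length [a,b] = 2 \<and> set [a,b] \<subseteq> S" by simp
    then show "w \<in> words 2 S" unfolding words_def by blast
  qed
qed

lemma words3:
  assumes "w \<in> words 3 S"
  shows "\<exists>a b c. a \<in> S \<and> b \<in> S \<and> c \<in> S \<and> w = (a ** b) ** c"
proof -
  from assms obtain xs where xs: "w = foldr (**) xs (mat 1)" "length xs = 3" "set xs \<subseteq> S"
    unfolding words_def by blast
  then obtain a b c where "xs = [a,b,c]" by (auto simp: numeral_3_eq_3 length_Suc_conv)
  then have "a \<in> S \<and> b \<in> S \<and> c \<in> S \<and> w = (a ** b) ** c"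
    using xs by (simp add: matrix_mul_assoc)
  then show ?thesis by blast
qed

lemma L23: "L0 3 S = L0 2 (S::('a::field^2^2) set)"
proof
  let ?B = "\<Union>m\<in>{1..2::nat}. words m S"
  have i12: "{1..2::nat} = {1,2}" by auto
  have B: "?B = S \<union> {a ** b | a b. a \<in> S \<and> b \<in> S}"
    by (simp only: i12 words1 words2 UN_insert UN_empty Un_empty_right)
  have "(\<Union>m\<in>{1..3::nat}. words m S) \<subseteq> M.span ?B"
  proof
    fix w assume "w \<in> (\<Union>m\<in>{1..3::nat}. words m S)"
    then obtain m where m: "m \<in> {1..3::nat}" "w \<in> words m S" by blast
    then have "m = 1 \<or> m = 2 \<or> m = 3" by auto
    then show "w \<in> M.span ?B"
    proof (elim disjE)
      assume "m = 1" then show ?thesis using m by (intro M.span_base) auto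
    next
      assume "m = 2" then show ?thesis using m by (intro M.span_base) auto
    next
      assume "m = 3"
      then obtain a b c where abc: "a \<in> S" "b \<in> S" "c \<in> S" "w = (a ** b) ** c"
        using m words3 by blast
      have "{a,b,c} \<union> {p ** q | p q. p \<in> {a,b,c} \<and> q \<in> {a,b,c}} \<subseteq> ?B"
        unfolding B using abc by blast
      from M.span_mono[OF this] key[of a b c] show ?thesis using abc by auto
    qed
  qed
  then have "M.span (\<Union>m\<in>{1..3::nat}. words m S) \<subseteq> M.span ?B"
    using M.span_minimal M.subspace_span by blast
  then show "L0 3 S \<subseteq> L0 2 S" by (simp add: L0_def lspan_def)
  show "L0 2 S \<subseteq> L0 3 S" unfolding L0_def lspan_def
    by (intro M.span_mono UN_mono) auto
qed

lemma l0_le2: "l0 (S::('a::field^2^2) set) \<le> 2"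
proof -
  have e: "Suc 2 = (3::nat)" by simp
  show ?thesis unfolding l0_def by (rule Least_le) (simp only: e L23)
qed

definition JJ :: "'a::field^2^2" where "JJ = EE 1 2 + EE 2 1"

lemma ex_gen: "generating {EE 1 1, JJ :: 'a::field^2^2}"
  unfolding generating_def gen_alg_def
proof (rule ccontr)
  assume "\<Inter> {A. {EE 1 1, JJ} \<subseteq> A \<and> subalgebra A} \<noteq> (UNIV::('a^2^2) set)"
  then obtain A w where A: "{EE 1 1, JJ} \<subseteq> A" "subalgebra A" and w: "(w::'a^2^2) \<notin> A" by blast
  have clm: "x ** y \<in> A" if "x \<in> A" "y \<in> A" for x y
    using A(2) that unfolding subalgebra_def by auto
  have cla: "x + y \<in> A" if "x \<in> A" "y \<in> A" for x y
    using A(2) that unfolding subalgebra_def by auto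
  have cls: "smat c x \<in> A" if "x \<in> A" for x c
    using A(2) that unfolding subalgebra_def by auto
  have e11: "EE 1 1 \<in> A" and j: "JJ \<in> A" using A(1) by auto
  have e12: "EE 1 2 \<in> A"
  proof -
    have "EE 1 1 ** JJ = (EE 1 2 :: 'a^2^2)" by (simp add: mat_eq2 mult_ent EE_def JJ_def)
    then show ?thesis using clm[OF e11 j] by simp
  qed
  have e21: "EE 2 1 \<in> A"
  proof -
    have "JJ ** EE 1 1 = (EE 2 1 :: 'a^2^2)" by (simp add: mat_eq2 mult_ent EE_def JJ_def)
    then show ?thesis using clm[OF j e11] by simp
  qed
  have e22: "EE 2 2 \<in> A"
  proof -
    have "JJ ** EE 1 2 = (EE 2 2 :: 'a^2^2)" by (simp add: mat_eq2 mult_ent EE_def JJ_def)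
    then show ?thesis using clm[OF j e12] by simp
  qed
  have "w = smat (w$1$1) (EE 1 1) + smat (w$1$2) (EE 1 2) + smat (w$2$1) (EE 2 1) + smat (w$2$2) (EE 2 2)"
    by (simp add: mat_eq2 EE_def)
  also have "\<dots> \<in> A" using e11 e12 e21 e22 by (intro cla cls)
  finally show False using w by simp
qed

lemma ex_l0: "l0 {EE 1 1, JJ :: 'a::field^2^2} = 2"
  unfolding l0_def
proof (rule Least_equality)
  show "L0 2 {EE 1 1, JJ} = L0 (Suc 2) {EE 1 1, JJ :: 'a^2^2}"
  proof -
    have e: "Suc 2 = (3::nat)" by simp
    show ?thesis by (simp only: e L23)
  qed
next
  fix m assume m: "L0 m {EE 1 1, JJ} = L0 (Suc m) {EE 1 1, JJ :: 'a^2^2}"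
  let ?S = "{EE 1 1, JJ :: 'a^2^2}"
  have L1: "L0 1 ?S = M.span ?S" by (simp add: L0_def lspan_def words1[simplified])
  have L0e: "L0 0 ?S = {0}" by (simp add: L0_def lspan_def)
  have ne: "EE 1 1 \<noteq> (0::'a^2^2)" by (simp add: mat_eq2 EE_def)
  have "M.subspace {w::'a^2^2. w$1$2 = w$2$1}"
    unfolding M.subspace_def by (simp add: vector_add_component)
  moreover have "?S \<subseteq> {w::'a^2^2. w$1$2 = w$2$1}" by (simp add: EE_def JJ_def vector_add_component)
  ultimately have sub: "M.span ?S \<subseteq> {w::'a^2^2. w$1$2 = w$2$1}" by (intro M.span_minimal)
  have "(EE 1 2 :: 'a^2^2) \<notin> {w::'a^2^2. w$1$2 = w$2$1}" by (simp add: EE_def)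
  then have e12n: "EE 1 2 \<notin> M.span ?S" using sub by blast
  have "EE 1 2 \<in> words 2 ?S"
  proof -
    have "EE 1 1 ** JJ = (EE 1 2 :: 'a^2^2)" by (simp add: mat_eq2 mult_ent EE_def JJ_def)
    moreover have "EE 1 1 ** JJ \<in> words 2 ?S" unfolding words2 by blast
    ultimately show ?thesis by simp
  qed
  then have "EE 1 2 \<in> L0 2 ?S" unfolding L0_def lspan_def
    by (intro M.span_base UN_I[of 2]) auto
  show "2 \<le> m"
  proof (rule ccontr)
    assume "\<not> 2 \<le> m"
    then have "m = 0 \<or> m = 1" by auto
    then show False
    proof
      assume "m = 0"
      then have "L0 1 ?S = {0}" using m L0e by simp
      then show False using L1 ne M.span_base[of "EE 1 1" ?S] by auto
    next
      assume "m = 1"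
      then have "L0 2 ?S = M.span ?S" using m L1 by (simp add: numeral_2_eq_2)
      then show False using e12n \<open>EE 1 2 \<in> L0 2 ?S\<close> by simp
    qed
  qed
qed

theorem mainTheorem3:
  shows "(\<forall>S :: (('a::field)^2^2) set. finite S \<and> generating S \<longrightarrow> l0 S \<le> 2)
       \<and> (\<exists>S :: (('a::field)^2^2) set. finite S \<and> generating S \<and> l0 S = 2)"
proof (intro conjI allI impI)
  fix S :: "('a::field^2^2) set"
  show "l0 S \<le> 2" by (rule l0_le2)
next
  have "finite {EE 1 1, JJ :: 'a::field^2^2}" by simp
  then show "\<exists>S :: (('a::field)^2^2) set. finite S \<and> generating S \<and> l0 S = 2"
    using ex_gen ex_l0 by blast
qed

end
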